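(* Let $K$ be a compact space, $|\cdot|$ a norm on $\mathbb{R}^n$, $f\colon K\to\mathbb{R}^n$ a continuous function and $\alpha>0$. Then every $\alpha$-perturbation of $f$ has a root in $K$ if and only if the restriction $f|_{|f|^{-1}(\{\alpha\})}$ cannot be extended to a continuous map $|f|^{-1}([0,\alpha])\to\mathbb{R}^n\setminus\{0\}$.
   Context: Here $|f|\colon K\to[0,\infty)$ denotes $x\mapsto|f(x)|$. An $\alpha$-perturbation of $f$ is a continuous function $g\colon K\to\mathbb{R}^n$ with $\max_{x\in K}|g(x)-f(x)|\le\alpha$. *)

theory Defs
  imports "HOL-Analysis.Analysis"
begin

definition is_norm :: "(real ^ 'n \<Rightarrow> real) \<Rightarrow> bool" where
  "is_norm N \<longleftrightarrow>
     (\<forall>x. N x = 0 \<longleftrightarrow> x = 0) \<and>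
     (\<forall>x y. N (x + y) \<le> N x + N y) \<and>
     (\<forall>c x. N (c *\<^sub>R x) = \<bar>c\<bar> * N x)"

definition perturbation ::
  "'a topology \<Rightarrow> (real ^ 'n \<Rightarrow> real) \<Rightarrow> real \<Rightarrow> ('a \<Rightarrow> real ^ 'n) \<Rightarrow> ('a \<Rightarrow> real ^ 'n) \<Rightarrow> bool" where
  "perturbation X N \<alpha> f g \<longleftrightarrow>
     continuous_map X euclidean g \<and> (\<forall>x\<in>topspace X. N (g x - f x) \<le> \<alpha>)"

end

theory Submission
  imports Defs
begin

lemma isn_0: "is_norm N \<Longrightarrow> N 0 = 0" by (simp add: is_norm_def)
lemma isn_nonneg: assumes "is_norm N" shows "N x \<ge> 0"
proof -
  have "N (x + (-1) *\<^sub>R x) \<le> N x + N ((-1) *\<^sub>R x)" using assms unfolding is_norm_def by blast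
  moreover have "N ((-1) *\<^sub>R x) = N x" using assms unfolding is_norm_def by (metis abs_minus_cancel abs_one mult_1)
  ultimately show ?thesis using isn_0[OF assms] by simp
qed
lemma isn_minus: assumes "is_norm N" shows "N (x - y) = N (y - x)"
proof -
  have "N ((-1) *\<^sub>R (y - x)) = N (y - x)" using assms unfolding is_norm_def by (metis abs_minus_cancel abs_one mult_1)
  thus ?thesis by simp
qed
lemma isn_sum: assumes "is_norm N" "finite S" shows "N (sum f S) \<le> (\<Sum>i\<in>S. N (f i))"
  using assms(2)
proof (induction S rule: finite_induct)
  case empty then show ?case using isn_0[OF assms(1)] by simp
next
  case (insert a S)
  have "N (f a + sum f S) \<le> N (f a) + N (sum f S)" using assms(1) by (simp add: is_norm_def)
  then show ?case using insert by simp
qed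
lemma isn_bound: assumes "is_norm N" shows "N (x::real^'n) \<le> (\<Sum>b\<in>Basis. N b) * norm x"
proof -
  have "N x = N (\<Sum>b\<in>Basis. inner x b *\<^sub>R b)" by (simp add: euclidean_representation)
  also have "\<dots> \<le> (\<Sum>b\<in>Basis. N (inner x b *\<^sub>R b))" by (rule isn_sum[OF assms]) simp
  also have "\<dots> = (\<Sum>b\<in>Basis. \<bar>inner x b\<bar> * N b)" using assms by (simp add: is_norm_def)
  also have "\<dots> \<le> (\<Sum>b\<in>Basis. norm x * N b)"
    by (rule sum_mono) (simp add: Basis_le_norm isn_nonneg[OF assms] mult_right_mono)
  finally show ?thesis by (simp add: sum_distrib_left mult.commute)
qed
lemma isn_cont: assumes "is_norm N" shows "continuous_on UNIV (N :: real^'n \<Rightarrow> real)"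
proof -
  define C where "C = (\<Sum>b\<in>(Basis::(real^'n) set). N b) + 1"
  have C: "C > 0" unfolding C_def using isn_nonneg[OF assms] by (simp add: sum_nonneg add_nonneg_pos)
  have L: "\<bar>N x - N y\<bar> \<le> C * norm (x - y)" for x y :: "real^'n"
  proof -
    have t1: "N x \<le> N y + N (x - y)" using assms unfolding is_norm_def by (metis add.commute diff_add_cancel)
    have t2: "N y \<le> N x + N (y - x)" using assms unfolding is_norm_def by (metis add.commute diff_add_cancel)
    have "N (x - y) \<le> C * norm (x - y)" using isn_bound[OF assms, of "x-y"] unfolding C_def
      by (simp add: distrib_right add_increasing2)
    thus ?thesis using t1 t2 isn_minus[OF assms, of x y] by linarith
  qed
  show ?thesis unfolding continuous_on_iff
  proof (intro ballI allI impI)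
    fix x :: "real^'n" and e :: real assume "e > 0"
    show "\<exists>d>0. \<forall>x'\<in>UNIV. dist x' x < d \<longrightarrow> dist (N x') (N x) < e"
    proof (intro exI[of _ "e / C"] conjI ballI impI)
      show "e / C > 0" using C \<open>e>0\<close> by simp
      fix x' assume "dist x' x < e / C"
      hence "C * norm (x' - x) < e" using C by (simp add: dist_norm field_simps)
      thus "dist (N x') (N x) < e" using L[of x' x] by (simp add: dist_real_def)
    qed
  qed
qed

lemma isn_scale: "is_norm N \<Longrightarrow> N (c *\<^sub>R x) = \<bar>c\<bar> * N x" by (simp add: is_norm_def)
lemma isn_eq0: "is_norm N \<Longrightarrow> N x = 0 \<longleftrightarrow> x = 0" by (simp add: is_norm_def)
lemma isn_tri: "is_norm N \<Longrightarrow> N (x + y) \<le> N x + N y" by (simp add: is_norm_def)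

lemma cont_N_comp [continuous_intros]:
  "is_norm N \<Longrightarrow> continuous_on S k \<Longrightarrow> continuous_on S (\<lambda>x. N (k x :: real^'n))"
  by (rule continuous_on_compose2[OF isn_cont]) auto

lemma cont_comp2:
  assumes "continuous_map X euclidean f" "continuous_map X euclidean g" "continuous_on S \<Phi>"
    "\<forall>x\<in>topspace X. (f x, g x) \<in> S"
  shows "continuous_map X euclidean (\<lambda>x. \<Phi> (f x, g x))"
proof -
  have "continuous_map X (prod_topology euclidean euclidean) (\<lambda>x. (f x, g x))"
    by (rule continuous_map_pairedI[OF assms(1,2)])
  hence c: "continuous_map X euclidean (\<lambda>x. (f x, g x))" by simp
  have 1: "continuous_map X (subtopology euclidean S) (\<lambda>x. (f x, g x))"
    unfolding continuous_map_in_subtopology using c assms(4) by (simp add: Pi_iff)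
  have 2: "continuous_map (subtopology euclidean S) euclidean \<Phi>" using assms(3) by simp
  have "continuous_map X euclidean (\<Phi> \<circ> (\<lambda>x. (f x, g x)))" by (rule continuous_map_compose[OF 1 2])
  thus ?thesis by (simp add: o_def)
qed

lemma contPhi1: "is_norm N \<Longrightarrow> \<alpha> > 0 \<Longrightarrow> continuous_on (UNIV \<times> (-{0})) (\<lambda>p::(real^'n)\<times>(real^'n). fst p +
          min 1 (N ((\<alpha> / N (snd p)) *\<^sub>R snd p - fst p) / \<alpha>) *\<^sub>R ((\<alpha> / N (snd p)) *\<^sub>R snd p))"
  apply (intro continuous_intros)
  apply (simp_all add: isn_eq0)
  done

lemma contPhi2: "is_norm N \<Longrightarrow> continuous_on (UNIV \<times> (-{0})) (\<lambda>p::(real^'n)\<times>(real^'n).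
           (let \<rho> = min 1 ((N (fst p) + N (snd p) - N (snd p - fst p)) / N (snd p))
            in (1 - \<rho>) *\<^sub>R snd p + \<rho> *\<^sub>R fst p))"
  unfolding Let_def
  apply (intro continuous_intros)
  apply (simp_all add: isn_eq0)
  done

theorem lemma3p3:
  fixes X :: "'a topology" and N :: "real ^ 'n \<Rightarrow> real"
    and f :: "'a \<Rightarrow> real ^ 'n" and \<alpha> :: real
  assumes "compact_space X" and "is_norm N"
    and "continuous_map X euclidean f" and "\<alpha> > 0"
  shows "(\<forall>g. perturbation X N \<alpha> f g \<longrightarrow> (\<exists>x\<in>topspace X. g x = 0)) \<longleftrightarrow>
         \<not> (\<exists>h. continuous_map (subtopology X {x \<in> topspace X. N (f x) \<le> \<alpha>})
                                  (subtopology euclidean (- {0})) h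
               \<and> (\<forall>x\<in>topspace X. N (f x) = \<alpha> \<longrightarrow> h x = f x))"
proof
  note nN = assms(2)
  let ?A = "{x \<in> topspace X. N (f x) \<le> \<alpha>}"
  have contNf: "continuous_map X euclidean (\<lambda>x. N (f x))"
    using isn_cont[OF nN] assms(3) continuous_map_compose[of X euclidean f euclidean N]
    by (simp add: o_def)
  {
    assume L: "\<forall>g. perturbation X N \<alpha> f g \<longrightarrow> (\<exists>x\<in>topspace X. g x = 0)"
    show "\<not> (\<exists>h. continuous_map (subtopology X ?A) (subtopology euclidean (- {0})) h
               \<and> (\<forall>x\<in>topspace X. N (f x) = \<alpha> \<longrightarrow> h x = f x))"
    proof
      assume "\<exists>h. continuous_map (subtopology X ?A) (subtopology euclidean (- {0})) h
               \<and> (\<forall>x\<in>topspace X. N (f x) = \<alpha> \<longrightarrow> h x = f x)"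
      then obtain h where hc: "continuous_map (subtopology X ?A) (subtopology euclidean (- {0})) h"
        and hf: "\<And>x. x\<in>topspace X \<Longrightarrow> N (f x) = \<alpha> \<Longrightarrow> h x = f x" by blast
      have hnz: "h x \<noteq> 0" if "x \<in> ?A" for x
        using hc that by (auto simp: continuous_map_in_subtopology Pi_iff)
      define \<Phi> where "\<Phi> = (\<lambda>p::(real^'n)\<times>(real^'n). fst p +
          min 1 (N ((\<alpha> / N (snd p)) *\<^sub>R snd p - fst p) / \<alpha>) *\<^sub>R ((\<alpha> / N (snd p)) *\<^sub>R snd p))"
      define g where "g = (\<lambda>x. if N (f x) \<le> \<alpha> then \<Phi> (f x, h x) else f x)"
      have contPhi: "continuous_on (UNIV \<times> (-{0})) \<Phi>"
        unfolding \<Phi>_def using contPhi1[OF nN assms(4)] .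
      have gc: "continuous_map X euclidean g"
        unfolding g_def
      proof (rule continuous_map_cases_le[where p="\<lambda>x. N (f x)" and q="\<lambda>x. \<alpha>", OF contNf])
        show "continuous_map X euclideanreal (\<lambda>x. \<alpha>)" by simp
        show "continuous_map (subtopology X ?A) euclidean (\<lambda>x. \<Phi> (f x, h x))"
          by (rule cont_comp2[OF continuous_map_from_subtopology[OF assms(3)]
                 continuous_map_into_fulltopology[OF hc] contPhi]) (auto simp: hnz)
        show "continuous_map (subtopology X {x \<in> topspace X. \<alpha> \<le> N (f x)}) euclidean f"
          by (rule continuous_map_from_subtopology[OF assms(3)])
        fix x assume x: "x \<in> topspace X" "N (f x) = \<alpha>"
        then have "h x = f x" by (rule hf)
        then show "\<Phi> (f x, h x) = f x"
          using x assms(4) by (simp add: \<Phi>_def isn_0[OF nN])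
      qed
      have key: "\<Phi> (f x, h x) \<noteq> 0 \<and> N (\<Phi> (f x, h x) - f x) \<le> \<alpha>" if x: "x \<in> ?A" for x
      proof -
        define a where "a = f x"
        define w where "w = h x"
        define v where "v = (\<alpha> / N w) *\<^sub>R w"
        define s where "s = min 1 (N (v - a) / \<alpha>)"
        have w0: "w \<noteq> 0" using hnz[OF x] by (simp add: w_def)
        have Nw: "N w > 0" using w0 isn_eq0[OF nN] isn_nonneg[OF nN] by (metis less_eq_real_def)
        have Nv: "N v = \<alpha>" using Nw assms(4) by (simp add: v_def isn_scale[OF nN])
        have s0: "s \<ge> 0" "s \<le> 1" using assms(4) isn_nonneg[OF nN] by (auto simp: s_def)
        have Phi: "\<Phi> (f x, h x) = a + s *\<^sub>R v" by (simp add: \<Phi>_def a_def w_def v_def s_def)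
        have "N (\<Phi> (f x, h x) - f x) = s * \<alpha>" using Phi s0 Nv by (simp add: a_def isn_scale[OF nN])
        moreover have "s * \<alpha> \<le> \<alpha>" using s0 assms(4) by simp
        moreover have "a + s *\<^sub>R v \<noteq> 0"
        proof
          assume z: "a + s *\<^sub>R v = 0"
          hence aeq: "a = (- s) *\<^sub>R v" by (simp add: eq_neg_iff_add_eq_0 add.commute)
          have "v - a = (1 + s) *\<^sub>R v" using aeq by (simp add: algebra_simps)
          hence "N (v - a) = (1 + s) * \<alpha>" using s0 Nv by (simp add: isn_scale[OF nN])
          hence "N (v - a) / \<alpha> = 1 + s" using assms(4) by simp
          hence s1: "s = 1" using s0 unfolding s_def by linarith
          hence "a = - v" using aeq by simp
          hence Na: "N a = \<alpha>" using Nv isn_scale[OF nN, of "-1" v] by simp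
          hence "w = a" using hf x by (simp add: a_def w_def)
          hence "v = a" using Na assms(4) by (simp add: v_def)
          hence "(2::real) *\<^sub>R a = 0" using \<open>a = - v\<close> by (simp add: scaleR_2)
          hence "a = 0" by simp
          thus False using Na assms(4) isn_0[OF nN] by simp
        qed
        ultimately show ?thesis using Phi by simp
      qed
      have "perturbation X N \<alpha> f g"
        unfolding perturbation_def
      proof (intro conjI gc ballI)
        fix x assume "x \<in> topspace X"
        then show "N (g x - f x) \<le> \<alpha>"
          using key assms(4) by (auto simp: g_def isn_0[OF nN])
      qed
      then obtain x where x: "x \<in> topspace X" "g x = 0" using L by blast
      show False
      proof (cases "N (f x) \<le> \<alpha>")
        case True then show ?thesis using key[of x] x by (simp add: g_def)
      next
        case False then show ?thesis using x assms(4) isn_0[OF nN] by (simp add: g_def)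
      qed
    qed
  }
  {
    assume R: "\<not> (\<exists>h. continuous_map (subtopology X ?A) (subtopology euclidean (- {0})) h
               \<and> (\<forall>x\<in>topspace X. N (f x) = \<alpha> \<longrightarrow> h x = f x))"
    show "\<forall>g. perturbation X N \<alpha> f g \<longrightarrow> (\<exists>x\<in>topspace X. g x = 0)"
    proof (intro allI impI)
      fix g assume P: "perturbation X N \<alpha> f g"
      have gc: "continuous_map X euclidean g" and gN: "\<And>x. x \<in> topspace X \<Longrightarrow> N (g x - f x) \<le> \<alpha>"
        using P by (auto simp: perturbation_def)
      show "\<exists>x\<in>topspace X. g x = 0"
      proof (rule ccontr)
        assume "\<not> (\<exists>x\<in>topspace X. g x = 0)"
        hence gnz: "\<And>x. x \<in> topspace X \<Longrightarrow> g x \<noteq> 0" by blast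
        define \<Phi> where "\<Phi> = (\<lambda>p::(real^'n)\<times>(real^'n).
           (let \<rho> = min 1 ((N (fst p) + N (snd p) - N (snd p - fst p)) / N (snd p))
            in (1 - \<rho>) *\<^sub>R snd p + \<rho> *\<^sub>R fst p))"
        have contPhi: "continuous_on (UNIV \<times> (-{0})) \<Phi>"
          unfolding \<Phi>_def using contPhi2[OF nN] .
        have key: "\<Phi> (a, b) \<noteq> 0" if b0: "b \<noteq> 0" for a b
        proof
          define \<rho> where "\<rho> = min 1 ((N a + N b - N (b - a)) / N b)"
          have Nb: "N b > 0" using b0 isn_eq0[OF nN] isn_nonneg[OF nN] by (metis less_eq_real_def)
          have "N (-a) = N a" using isn_minus[OF nN, of 0 a] by simp
          hence tri: "N (b - a) \<le> N b + N a" using isn_tri[OF nN, of b "- a"] by simp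
          have r0: "\<rho> \<ge> 0" "\<rho> \<le> 1" using Nb tri by (auto simp: \<rho>_def intro!: divide_nonneg_pos)
          assume "\<Phi> (a, b) = 0"
          hence z: "(1 - \<rho>) *\<^sub>R b + \<rho> *\<^sub>R a = 0" by (simp add: \<Phi>_def Let_def \<rho>_def)
          have rn0: "\<rho> \<noteq> 0" using z b0 by auto
          define c where "c = (\<rho> - 1) / \<rho>"
          have c0: "c \<le> 0" using r0 rn0 by (simp add: c_def divide_nonpos_pos)
          have "\<rho> *\<^sub>R a = (\<rho> - 1) *\<^sub>R b" using z by (simp add: algebra_simps eq_neg_iff_add_eq_0)
          hence "(1 / \<rho>) *\<^sub>R (\<rho> *\<^sub>R a) = (1 / \<rho>) *\<^sub>R ((\<rho> - 1) *\<^sub>R b)" by simp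
          hence aeq: "a = c *\<^sub>R b" using rn0 unfolding c_def scaleR_scaleR by simp
          have "b - a = (1 - c) *\<^sub>R b" using aeq by (simp add: algebra_simps)
          hence "N (b - a) = (1 - c) * N b" using c0 by (simp add: isn_scale[OF nN])
          moreover have "N a = - c * N b" using aeq c0 by (simp add: isn_scale[OF nN])
          ultimately have "\<rho> = 0" by (simp add: \<rho>_def algebra_simps)
          thus False using rn0 by simp
        qed
        define h where "h = (\<lambda>x. \<Phi> (f x, g x))"
        have "continuous_map (subtopology X ?A) (subtopology euclidean (- {0})) h"
          unfolding continuous_map_in_subtopology
        proof
          show "continuous_map (subtopology X ?A) euclidean h"
            unfolding h_def
            by (rule cont_comp2[OF continuous_map_from_subtopology[OF assms(3)]
                 continuous_map_from_subtopology[OF gc] contPhi]) (auto simp: gnz)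
          show "h \<in> topspace (subtopology X ?A) \<rightarrow> - {0}"
            using key gnz by (auto simp: h_def)
        qed
        moreover have "h x = f x" if x: "x \<in> topspace X" "N (f x) = \<alpha>" for x
        proof -
          have Nb: "N (g x) > 0" using gnz[OF x(1)] isn_eq0[OF nN] isn_nonneg[OF nN] by (metis less_eq_real_def)
          have "N (g x - f x) \<le> N (f x)" using gN[OF x(1)] x(2) by simp
          hence "(N (f x) + N (g x) - N (g x - f x)) / N (g x) \<ge> 1" using Nb by simp
          hence "min 1 ((N (f x) + N (g x) - N (g x - f x)) / N (g x)) = 1" by simp
          thus ?thesis by (simp add: h_def \<Phi>_def Let_def)
        qed
        ultimately show False using R by blast
      qed
    qed
  }
qed

end
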